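(* Let $p$ be a prime, $k$ a commutative ring of characteristic $p$, $n\in\mathbb{N}$, and $x\in W\Omega_{k[X_1,\ldots,X_n]/k}$. There exists $\varepsilon>0$ with $\gamma_\varepsilon(x)\neq-\infty$ if and only if there exists $\varepsilon'>0$ with $\zeta_{\varepsilon'}(x)\neq-\infty$.
   Context: $W\Omega=W\Omega_{k[\underline{X}]/k}$ is the (Langer–Zink) de Rham–Witt complex of $k[\underline X]=k[X_1,\ldots,X_n]$ over $k$, with $d$, $F$, $V$ and Teichmüller map $[\cdot]$. A weight function is a map $a\colon\{1,\ldots,n\}\to\mathbb{N}[1/p]$; $|a|=\sum_i a_i$; $\mathrm{Supp}(a)=\{i: a_i\neq0\}$; $a|_J$ equals $a$ on $J$ and $0$ elsewhere; $\mathrm{val}_p(a)=\min_{i\in\mathrm{Supp}(a)}\mathrm{val}_p(a_i)$, $u(a)=\max\{0,-\mathrm{val}_p(a)\}$ ($u(0)=0$). A partition of $a$ is a subset $I\subseteq\mathrm{Supp}(a)$; $\mathcal P$ is the set of pairs $(a,I)$. Order $\mathrm{Supp}(a)$ by $i\preceq i'$ iff $\mathrm{val}_p(a_i)<\mathrm{val}_p(a_{i'})$, or equality and $i\leqslant i'$. For $I=\{i_1\prec\cdots\prec i_m\}$: $I_0=\{i: i\prec i_1\}$ ($=\mathrm{Supp}(a)$ if $m=0$), $I_l=\{i: i_l\preceq i\prec i_{l+1}\}$ ($1\leqslant l<m$), $I_m=\{i: i_m\preceq i\}$. For $a\neq0$, $g(a)=F^{u(a)+\mathrm{val}_p(a)}d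 V^{u(a)}[\underline X^{p^{-\mathrm{val}_p(a)}a}]$ with $\underline X^c=\prod X_i^{c_i}$. For $\eta\in W(k)$: $e(\eta,a,I)=dV^{u(a)}(\eta[\underline X^{p^{u(a)}a|_{I_1}}])\prod_{l=2}^m g(a|_{I_l})$ if $I_0=\emptyset$ and $u(a)\neq0$, else $e(\eta,a,I)=V^{u(a)}(\eta[\underline X^{p^{u(a)}a|_{I_0}}])\prod_{l=1}^m g(a|_{I_l})$. Every $x$ is uniquely a convergent sum $\sum_{(a,I)\in\mathcal P}e(\eta_{a,I},a,I)$, $\eta_{a,I}\in W(k)$. $\mathrm{val}_V(\eta)=\sup\{m:\eta\in V^m(W(k))\}$ ($+\infty$ for $\eta=0$). For $\varepsilon>0$: $\gamma_\varepsilon(x)=\inf_{(a,I)}\big(\mathrm{val}_V(\eta_{a,I})+u(a)-\varepsilon|a|\big)$ and $\zeta_\varepsilon(x)=\inf_{(a,I)}\big(2n\,\mathrm{val}_V(\eta_{a,I})+c(a,I)u(a)-\varepsilon|a|\big)$, where $c(a,I)=\#I$ if $I_0=\emptyset$ and $\#I+1$ otherwise (empty infima are $+\infty$). *)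

theory Defs
  imports "HOL-Computational_Algebra.Primes" "HOL-Library.Extended_Real"
begin

text \<open>Coordinate model of the de Rham--Witt complex W Omega of k[X_1,...,X_n] over k
  (Langer--Zink): an element x is identified with its unique family of coefficients
  eta_(a,I) in W(k), indexed by pairs (a,I) in the set P, subject to convergence.
  A Witt vector in W(k) is represented by its sequence of Witt components nat => k,
  so that V^m(W(k)) consists of the vectors whose first m components vanish.\<close>

type_synonym weight = "nat \<Rightarrow> rat"
type_synonym 'k witt = "nat \<Rightarrow> 'k"

definition padic_val :: "nat \<Rightarrow> rat \<Rightarrow> int" where
  "padic_val p q = (case quotient_of q of (r, s) \<Rightarrow>
      int (multiplicity (int p) r) - int (multiplicity (int p) s))"

definition in_Npinv :: "nat \<Rightarrow> rat \<Rightarrow> bool" where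
  "in_Npinv p q \<longleftrightarrow> (\<exists>m e::nat. q = of_nat m / of_nat p ^ e)"

definition weight_fun :: "nat \<Rightarrow> nat \<Rightarrow> weight \<Rightarrow> bool" where
  "weight_fun p n a \<longleftrightarrow> (\<forall>i. i \<notin> {1..n} \<longrightarrow> a i = 0) \<and> (\<forall>i. in_Npinv p (a i))"

definition supp :: "weight \<Rightarrow> nat set" where
  "supp a = {i. a i \<noteq> 0}"

definition wabs :: "nat \<Rightarrow> weight \<Rightarrow> rat" where
  "wabs n a = (\<Sum>i\<in>{1..n}. a i)"

definition valp_w :: "nat \<Rightarrow> weight \<Rightarrow> int" where
  "valp_w p a = Min ((\<lambda>i. padic_val p (a i)) ` supp a)"

definition u_w :: "nat \<Rightarrow> weight \<Rightarrow> nat" where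
  "u_w p a = (if supp a = {} then 0 else nat (- valp_w p a))"

definition prec_eq :: "nat \<Rightarrow> weight \<Rightarrow> nat \<Rightarrow> nat \<Rightarrow> bool" where
  "prec_eq p a i j \<longleftrightarrow> padic_val p (a i) < padic_val p (a j)
      \<or> (padic_val p (a i) = padic_val p (a j) \<and> i \<le> j)"

text \<open>I_0 = elements of Supp(a) strictly preceding i_1 (all of Supp(a) if I is empty).\<close>
definition I0 :: "nat \<Rightarrow> weight \<Rightarrow> nat set \<Rightarrow> nat set" where
  "I0 p a I = {i \<in> supp a. \<forall>j\<in>I. prec_eq p a i j \<and> i \<noteq> j}"

definition c_coef :: "nat \<Rightarrow> weight \<Rightarrow> nat set \<Rightarrow> nat" where
  "c_coef p a I = (if I0 p a I = {} then card I else card I + 1)"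

definition partitions :: "nat \<Rightarrow> nat \<Rightarrow> (weight \<times> nat set) set" where
  "partitions p n = {(a, I). weight_fun p n a \<and> I \<subseteq> supp a}"

definition val_V :: "('k::zero) witt \<Rightarrow> nat" where
  "val_V \<eta> = (LEAST m. \<eta> m \<noteq> 0)"

text \<open>Coefficient families of elements of W Omega: the sum of the basic Witt
  differentials converges, i.e. for every m almost all eta_(a,I) lie in V^(m-u(a)) W(k).\<close>
definition dRW_elem :: "nat \<Rightarrow> nat \<Rightarrow> (weight \<times> nat set \<Rightarrow> ('k::zero) witt) \<Rightarrow> bool" where
  "dRW_elem p n \<eta> \<longleftrightarrow>
     (\<forall>m::nat. finite {(a, I) \<in> partitions p n.
         \<eta> (a, I) \<noteq> (\<lambda>_. 0) \<and> val_V (\<eta> (a, I)) + u_w p a < m})"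

text \<open>gamma_eps(x); terms with eta = 0 contribute +infinity and are omitted.\<close>
definition gamma_eps :: "nat \<Rightarrow> nat \<Rightarrow> real \<Rightarrow> (weight \<times> nat set \<Rightarrow> ('k::zero) witt) \<Rightarrow> ereal" where
  "gamma_eps p n \<epsilon> \<eta> = Inf {ereal (real (val_V (\<eta> (a, I))) + real (u_w p a)
        - \<epsilon> * real_of_rat (wabs n a)) | a I. (a, I) \<in> partitions p n \<and> \<eta> (a, I) \<noteq> (\<lambda>_. 0)}"

definition zeta_eps :: "nat \<Rightarrow> nat \<Rightarrow> real \<Rightarrow> (weight \<times> nat set \<Rightarrow> ('k::zero) witt) \<Rightarrow> ereal" where
  "zeta_eps p n \<epsilon> \<eta> = Inf {ereal (2 * real n * real (val_V (\<eta> (a, I)))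
        + real (c_coef p a I) * real (u_w p a)
        - \<epsilon> * real_of_rat (wabs n a)) | a I. (a, I) \<in> partitions p n \<and> \<eta> (a, I) \<noteq> (\<lambda>_. 0)}"

end

theory Submission
  imports Defs
begin

lemma inf_lb:
  fixes f :: "weight \<Rightarrow> nat set \<Rightarrow> real"
  assumes "\<And>a I. P a I \<Longrightarrow> C \<le> f a I"
  shows "Inf {ereal (f a I) | a I. P a I} \<noteq> -\<infinity>"
proof -
  have "ereal C \<le> Inf {ereal (f a I) | a I. P a I}"
    by (rule Inf_greatest) (auto intro: assms)
  then show ?thesis by auto
qed

lemma inf_real_lb:
  fixes f :: "weight \<Rightarrow> nat set \<Rightarrow> real"
  assumes "Inf {ereal (f a I) | a I. P a I} \<noteq> -\<infinity>"
  shows "\<exists>C. \<forall>a I. P a I \<longrightarrow> C \<le> f a I"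
proof (cases "Inf {ereal (f a I) | a I. P a I}")
  case (real r)
  have "\<forall>a I. P a I \<longrightarrow> r \<le> f a I"
  proof (intro allI impI)
    fix a I assume "P a I"
    then have "Inf {ereal (f a I) | a I. P a I} \<le> ereal (f a I)"
      by (intro Inf_lower) auto
    then show "r \<le> f a I" using real by simp
  qed
  then show ?thesis by blast
next
  case PInf
  have "\<forall>a I. P a I \<longrightarrow> 0 \<le> f a I"
  proof (intro allI impI)
    fix a I assume "P a I"
    then have "Inf {ereal (f a I) | a I. P a I} \<le> ereal (f a I)"
      by (intro Inf_lower) auto
    then show "0 \<le> f a I" using PInf by simp
  qed
  then show ?thesis by blast
next
  case MInf
  then show ?thesis using assms by simp
qed

lemma part_facts:
  assumes "(a, I) \<in> partitions p n"
  shows "supp a \<subseteq> {1..n}" "card I \<le> n" "c_coef p a I \<le> n + 1"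
    "supp a \<noteq> {} \<Longrightarrow> 1 \<le> c_coef p a I"
    "supp a = {} \<Longrightarrow> u_w p a = 0"
    "n = 0 \<Longrightarrow> wabs n a = 0"
proof -
  have w: "weight_fun p n a" and Is: "I \<subseteq> supp a" using assms by (auto simp: partitions_def)
  show s: "supp a \<subseteq> {1..n}" using w by (auto simp: weight_fun_def supp_def)
  have fI: "finite I" using Is s finite_subset by blast
  show c: "card I \<le> n" using card_mono[of "{1..n}" I] Is s by auto
  show "c_coef p a I \<le> n + 1" using c by (simp add: c_coef_def)
  show "1 \<le> c_coef p a I" if "supp a \<noteq> {}"
  proof (cases "I = {}")
    case True
    then have "I0 p a I = supp a" by (auto simp: I0_def)
    then show ?thesis using that by (simp add: c_coef_def)
  next
    case False
    then have "card I \<ge> 1" using fI by (simp add: Suc_le_eq card_gt_0_iff)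
    then show ?thesis by (simp add: c_coef_def)
  qed
  show "supp a = {} \<Longrightarrow> u_w p a = 0" by (simp add: u_w_def)
  show "n = 0 \<Longrightarrow> wabs n a = 0" by (simp add: wabs_def)
qed

theorem mainTheorem2:
  fixes p n :: nat and \<eta> :: "weight \<times> nat set \<Rightarrow> ('k::comm_ring_1) witt"
  assumes "prime p"
    and "CHAR('k) = p"
    and "dRW_elem p n \<eta>"
  shows "(\<exists>\<epsilon>>0. gamma_eps p n \<epsilon> \<eta> \<noteq> -\<infinity>) \<longleftrightarrow> (\<exists>\<epsilon>'>0. zeta_eps p n \<epsilon>' \<eta> \<noteq> -\<infinity>)"
proof (cases "n = 0")
  case True
  have g: "gamma_eps p n 1 \<eta> \<noteq> -\<infinity>"
    unfolding gamma_eps_def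
    by (rule inf_lb[where C=0]) (use part_facts True in auto)
  have z: "zeta_eps p n 1 \<eta> \<noteq> -\<infinity>"
    unfolding zeta_eps_def
    by (rule inf_lb[where C=0]) (use part_facts True in auto)
  show ?thesis using g z by (meson zero_less_one)
next
  case False
  then have n1: "real n \<ge> 1" by simp
  show ?thesis
  proof
    assume "\<exists>\<epsilon>>0. gamma_eps p n \<epsilon> \<eta> \<noteq> -\<infinity>"
    then obtain \<epsilon> where e: "\<epsilon> > 0" "gamma_eps p n \<epsilon> \<eta> \<noteq> -\<infinity>" by blast
    obtain C where C: "\<forall>a I. ((a, I) \<in> partitions p n \<and> \<eta> (a, I) \<noteq> (\<lambda>_. 0)) \<longrightarrow>
       C \<le> real (val_V (\<eta> (a, I))) + real (u_w p a) - \<epsilon> * real_of_rat (wabs n a)"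
      using inf_real_lb[OF e(2)[unfolded gamma_eps_def]] by blast
    have "zeta_eps p n \<epsilon> \<eta> \<noteq> -\<infinity>"
      unfolding zeta_eps_def
    proof (rule inf_lb[where C=C])
      fix a I assume P: "(a, I) \<in> partitions p n \<and> \<eta> (a, I) \<noteq> (\<lambda>_. 0)"
      have cu: "real (u_w p a) \<le> real (c_coef p a I) * real (u_w p a)"
      proof (cases "supp a = {}")
        case True then show ?thesis using part_facts(5)[of a I p n] P by simp
      next
        case False
        then have "1 \<le> real (c_coef p a I)" using part_facts(4)[of a I p n] P by simp
        then show ?thesis by (simp add: mult_le_cancel_right1)
      qed
      have "real (val_V (\<eta> (a, I))) \<le> 2 * real n * real (val_V (\<eta> (a, I)))"
        using n1 by (simp add: mult_le_cancel_right1)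
      then show "C \<le> 2 * real n * real (val_V (\<eta> (a, I))) + real (c_coef p a I) * real (u_w p a)
          - \<epsilon> * real_of_rat (wabs n a)" using C P cu by force
    qed
    then show "\<exists>\<epsilon>'>0. zeta_eps p n \<epsilon>' \<eta> \<noteq> -\<infinity>" using e(1) by blast
  next
    assume "\<exists>\<epsilon>'>0. zeta_eps p n \<epsilon>' \<eta> \<noteq> -\<infinity>"
    then obtain \<epsilon> where e: "\<epsilon> > 0" "zeta_eps p n \<epsilon> \<eta> \<noteq> -\<infinity>" by blast
    obtain C where C: "\<forall>a I. ((a, I) \<in> partitions p n \<and> \<eta> (a, I) \<noteq> (\<lambda>_. 0)) \<longrightarrow>
       C \<le> 2 * real n * real (val_V (\<eta> (a, I))) + real (c_coef p a I) * real (u_w p a)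
          - \<epsilon> * real_of_rat (wabs n a)"
      using inf_real_lb[OF e(2)[unfolded zeta_eps_def]] by blast
    define \<delta> where "\<delta> = \<epsilon> / (2 * real n)"
    have d: "\<delta> > 0" using e(1) n1 by (simp add: \<delta>_def)
    have "gamma_eps p n \<delta> \<eta> \<noteq> -\<infinity>"
      unfolding gamma_eps_def
    proof (rule inf_lb[where C="C / (2 * real n)"])
      fix a I assume P: "(a, I) \<in> partitions p n \<and> \<eta> (a, I) \<noteq> (\<lambda>_. 0)"
      have "real (c_coef p a I) \<le> 2 * real n"
        using part_facts(3)[of a I p n] P n1 by simp
      then have cu: "real (c_coef p a I) * real (u_w p a) \<le> 2 * real n * real (u_w p a)"
        by (simp add: mult_right_mono)
      have Ca: "C \<le> 2 * real n * real (val_V (\<eta> (a, I))) + real (c_coef p a I) * real (u_w p a)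
          - \<epsilon> * real_of_rat (wabs n a)" using C P by blast
      have de: "2 * real n * \<delta> = \<epsilon>" using n1 by (simp add: \<delta>_def)
      have "2 * real n * (real (val_V (\<eta> (a, I))) + real (u_w p a) - \<delta> * real_of_rat (wabs n a))
         = 2 * real n * real (val_V (\<eta> (a, I))) + 2 * real n * real (u_w p a) - \<epsilon> * real_of_rat (wabs n a)"
        using de by (simp add: algebra_simps)
      then have "C \<le> 2 * real n * (real (val_V (\<eta> (a, I))) + real (u_w p a) - \<delta> * real_of_rat (wabs n a))"
        using Ca cu by linarith
      then show "C / (2 * real n) \<le> real (val_V (\<eta> (a, I))) + real (u_w p a) - \<delta> * real_of_rat (wabs n a)"
        using n1 by (simp add: divide_le_eq mult.commute)
    qed
    then show "\<exists>\<epsilon>>0. gamma_eps p n \<epsilon> \<eta> \<noteq> -\<infinity>" using d by blast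
  qed
qed

end
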